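(* Let $\gamma>0$, $n\in\mathbb{N}$, $\nu=\nu^\gamma_{1/3,3}$. Let $P_n$ be the space of (restrictions to $\{x_1+x_2+x_3=1\}$ of) polynomials in $(x_1,x_2,x_3)$ of degree at most $n$, and let $Q_n\subset P_n$ be the linear span of $1$ and $\{F_k,G_k,H_k\}_{1\le k\le n}$, where $F_k=J_k(x_1)+J_k(x_2)+J_k(x_3)$, $G_k=J_k(x_1)-J_k(x_3)$, $H_k=J_k(x_1)-2J_k(x_2)+J_k(x_3)$. If $f\in P_n$ is orthogonal to $Q_n$ in $L^2(\nu)$, then $E_\nu[f\mid x_i]=0$ for each $i=1,2,3$.
   Context: $\nu^{\gamma}(dx)=x^{\gamma-1}e^{-x}\Gamma(\gamma)^{-1}dx$ on $(0,\infty)$ and $\nu^\gamma_{1/3,3}$ is the conditional law of $(\nu^\gamma)^{\otimes3}$ on $\{x\in(0,\infty)^3:x_1+x_2+x_3=1\}$. $J_k(u)=\frac{\Gamma(k+\gamma)}{k!\,\Gamma(k+3\gamma-1)}\sum_{l=0}^k(-1)^l\binom kl\frac{\Gamma(k+l+3\gamma-1)}{\Gamma(l+\gamma)}u^l$ (Jacobi polynomials orthogonal for Beta$(\gamma,2\gamma)$). $E_\nu[\cdot\mid x_i]$ is conditional expectation given the $\sigma$-algebra generated by $x_i$. *)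

theory Defs
  imports "HOL-Probability.Probability"
begin

type_synonym pt3 = "real \<times> real \<times> real"

definition coord :: "nat \<Rightarrow> pt3 \<Rightarrow> real" where
  "coord i p = (if i = 1 then fst p else if i = 2 then fst (snd p) else snd (snd p))"

text \<open>Density (w.r.t. Lebesgue measure in the coordinates (x_1,x_2), with x_3 = 1 - x_1 - x_2)
  of the conditional law of three i.i.d. Gamma(gamma) variables given x_1+x_2+x_3 = 1,
  i.e. the Dirichlet(gamma,gamma,gamma) law.\<close>
definition dirichlet3_density :: "real \<Rightarrow> real \<times> real \<Rightarrow> real" where
  "dirichlet3_density g q =
     (if fst q > 0 \<and> snd q > 0 \<and> fst q + snd q < 1
      then Gamma (3 * g) / (Gamma g ^ 3)
           * (fst q * snd q * (1 - fst q - snd q)) powr (g - 1)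
      else 0)"

definition nu3 :: "real \<Rightarrow> pt3 measure" where
  "nu3 g = distr (density lborel (\<lambda>q. ennreal (dirichlet3_density g q))) borel
                 (\<lambda>q. (fst q, snd q, 1 - fst q - snd q))"

text \<open>Jacobi polynomials J_k orthogonal for Beta(gamma, 2 gamma).\<close>
definition J :: "real \<Rightarrow> nat \<Rightarrow> real \<Rightarrow> real" where
  "J g k u = Gamma (real k + g) / (fact k * Gamma (real k + 3 * g - 1))
     * (\<Sum>l\<le>k. (-1) ^ l * real (k choose l) * Gamma (real (k + l) + 3 * g - 1)
                 / Gamma (real l + g) * u ^ l)"

definition F :: "real \<Rightarrow> nat \<Rightarrow> pt3 \<Rightarrow> real" where
  "F g k p = J g k (coord 1 p) + J g k (coord 2 p) + J g k (coord 3 p)"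

definition G :: "real \<Rightarrow> nat \<Rightarrow> pt3 \<Rightarrow> real" where
  "G g k p = J g k (coord 1 p) - J g k (coord 3 p)"

definition H :: "real \<Rightarrow> nat \<Rightarrow> pt3 \<Rightarrow> real" where
  "H g k p = J g k (coord 1 p) - 2 * J g k (coord 2 p) + J g k (coord 3 p)"

definition poly3_le :: "nat \<Rightarrow> (pt3 \<Rightarrow> real) \<Rightarrow> bool" where
  "poly3_le n f \<longleftrightarrow> (\<exists>c :: nat \<Rightarrow> nat \<Rightarrow> nat \<Rightarrow> real.
     \<forall>x y z. f (x, y, z) =
       (\<Sum>a\<le>n. \<Sum>b\<le>n. \<Sum>d\<le>n. if a + b + d \<le> n then c a b d * x ^ a * y ^ b * z ^ d else 0))"

definition Q_elem :: "real \<Rightarrow> nat \<Rightarrow> (pt3 \<Rightarrow> real) \<Rightarrow> bool" where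
  "Q_elem g n h \<longleftrightarrow> (\<exists>c0 (a :: nat \<Rightarrow> real) b c. \<forall>p.
     h p = c0 + (\<Sum>k\<in>{1..n}. a k * F g k p + b k * G g k p + c k * H g k p))"

end

theory Submission
  imports Defs "HOL-Computational_Algebra.Polynomial"
begin


lemma dens_meas[measurable]: "dirichlet3_density g \<in> borel_measurable borel"
  unfolding dirichlet3_density_def borel_prod[symmetric] by measurable

lemma dens_nonneg: "g > 0 \<Longrightarrow> 0 \<le> dirichlet3_density g q"
  unfolding dirichlet3_density_def
  by (auto intro!: mult_nonneg_nonneg divide_nonneg_nonneg Gamma_real_pos less_imp_le)

lemma T_meas[measurable]: "(\<lambda>q::real\<times>real. (fst q, snd q, 1 - fst q - snd q)) \<in> borel_measurable borel"
  unfolding borel_prod[symmetric] by measurable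

lemma sets_nu3[simp, measurable_cong]: "sets (nu3 g) = sets borel"
  by (simp add: nu3_def)

lemma space_nu3[simp]: "space (nu3 g) = UNIV"
  by (simp add: nu3_def)

lemma nu3_nn:
  assumes [measurable]: "\<Phi> \<in> borel_measurable borel"
  shows "(\<integral>\<^sup>+p. \<Phi> p \<partial>nu3 g) = (\<integral>\<^sup>+x. \<integral>\<^sup>+y. ennreal (dirichlet3_density g (x,y)) * \<Phi> (x, y, 1 - x - y) \<partial>lborel \<partial>lborel)"
proof -
  have "(\<integral>\<^sup>+p. \<Phi> p \<partial>nu3 g) = (\<integral>\<^sup>+q. ennreal (dirichlet3_density g q) * \<Phi> (fst q, snd q, 1 - fst q - snd q) \<partial>lborel)"
    unfolding nu3_def by (simp add: nn_integral_distr nn_integral_density)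
  also have "\<dots> = (\<integral>\<^sup>+q. ennreal (dirichlet3_density g q) * \<Phi> (fst q, snd q, 1 - fst q - snd q) \<partial>(lborel \<Otimes>\<^sub>M lborel))"
    by (simp add: lborel_prod)
  also have "\<dots> = (\<integral>\<^sup>+x. \<integral>\<^sup>+y. ennreal (dirichlet3_density g (x,y)) * \<Phi> (x, y, 1 - x - y) \<partial>lborel \<partial>lborel)"
    by (subst lborel.nn_integral_fst[symmetric]) (auto simp: lborel_prod)
  finally show ?thesis .
qed



lemma beta_nn:
  assumes "a > 0" "b > 0"
  shows "(\<integral>\<^sup>+t. ennreal (indicator {0..1} t * (t powr (a-1) * (1-t) powr (b-1))) \<partial>lborel) = ennreal (Beta a b)"
  by (rule nn_integral_has_integral_lebesgue[OF _ has_integral_Beta_real[OF assms]]) simp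

lemma sbeta_nn:
  assumes s: "s > 0" and ab: "a > 0" "b > 0"
  shows "(\<integral>\<^sup>+y. ennreal (indicator {0..s} y * (y powr (a-1) * (s-y) powr (b-1))) \<partial>lborel)
         = ennreal (s powr (a+b-1) * Beta a b)"
proof -
  have "(\<integral>\<^sup>+y. ennreal (indicator {0..s} y * (y powr (a-1) * (s-y) powr (b-1))) \<partial>lborel)
     = ennreal \<bar>s\<bar> * (\<integral>\<^sup>+x. ennreal (indicator {0..s} (0 + s*x) * ((0 + s*x) powr (a-1) * (s-(0 + s*x)) powr (b-1))) \<partial>lborel)"
    by (rule nn_integral_real_affine) (use s in auto)
  also have "(\<lambda>x. ennreal (indicator {0..s} (0 + s*x) * ((0 + s*x) powr (a-1) * (s-(0 + s*x)) powr (b-1))))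
     = (\<lambda>x. ennreal (s powr (a+b-2)) * ennreal (indicator {0..1} x * (x powr (a-1) * (1-x) powr (b-1))))"
  proof
    fix x
    have e1: "s*x \<in> {0..s} \<longleftrightarrow> x \<in> {0..1}" using s
      by (auto simp: zero_le_mult_iff mult_le_cancel_left1)
    show "ennreal (indicator {0..s} (0 + s*x) * ((0 + s*x) powr (a-1) * (s-(0 + s*x)) powr (b-1))) =
          ennreal (s powr (a+b-2)) * ennreal (indicator {0..1} x * (x powr (a-1) * (1-x) powr (b-1)))"
    proof (cases "x \<in> {0..1}")
      case True
      have "s - s*x = s * (1-x)" by (simp add: algebra_simps)
      moreover have "s powr (a+b-2) = s powr (a-1) * s powr (b-1)"
        by (simp add: powr_add[symmetric])
      ultimately show ?thesis using True e1 s
        by (simp add: powr_mult ennreal_mult'[symmetric] mult_ac)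
    next
      case False then show ?thesis using e1 by simp
    qed
  qed
  also have "ennreal \<bar>s\<bar> * (\<integral>\<^sup>+x. ennreal (s powr (a+b-2)) * ennreal (indicator {0..1} x * (x powr (a-1) * (1-x) powr (b-1))) \<partial>lborel)
     = ennreal s * (ennreal (s powr (a+b-2)) * ennreal (Beta a b))"
    using s by (simp add: nn_integral_cmult beta_nn[OF ab])
  also have "\<dots> = ennreal (s powr (a+b-1) * Beta a b)"
  proof -
    have "s * s powr (a+b-2) = s powr (a+b-1)" using s
    proof -
      have "s powr (a+b-1) = s powr (1 + (a+b-2))" by simp
      also have "\<dots> = s * s powr (a+b-2)" using s by (subst powr_add) simp
      finally show ?thesis by simp
    qed
    moreover have "Beta a b \<ge> 0" using ab by (simp add: Beta_def Gamma_real_pos less_imp_le)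
    ultimately show ?thesis using s
      by (simp add: ennreal_mult'[symmetric] ennreal_mult[symmetric] mult.assoc)
  qed
  finally show ?thesis .
qed



definition Cg :: "real \<Rightarrow> real" where "Cg g = Gamma (3 * g) / (Gamma g ^ 3)"
definition wt :: "real \<Rightarrow> real \<Rightarrow> real" where "wt g x = x powr (g-1) * (1-x) powr (2*g-1)"

lemma Cg_pos: "g > 0 \<Longrightarrow> Cg g > 0" by (simp add: Cg_def Gamma_real_pos)

lemma Beta_pos: "(a::real) > 0 \<Longrightarrow> b > 0 \<Longrightarrow> Beta a b > 0" unfolding Beta_def by (intro divide_pos_pos mult_pos_pos Gamma_real_pos) auto

lemma pow_powr: "(y::real) > 0 \<Longrightarrow> y ^ b * y powr c = y powr (real b + c)"
  by (simp add: powr_add powr_realpow)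

lemma nn_cmult_signed:
  assumes "(\<integral>\<^sup>+y. ennreal (\<phi> y) \<partial>M) = ennreal I" "\<And>y. \<phi> y \<ge> 0" "I \<ge> 0"
    and [measurable]: "\<phi> \<in> borel_measurable M"
  shows "(\<integral>\<^sup>+y. ennreal (K * \<phi> y) \<partial>M) = ennreal (K * I)"
proof (cases "K \<ge> 0")
  case True
  then show ?thesis using assms by (simp add: ennreal_mult nn_integral_cmult)
next
  case False
  then have "\<And>y. ennreal (K * \<phi> y) = 0" using assms(2)
    by (simp add: ennreal_neg mult_nonpos_nonneg)
  moreover have "ennreal (K * I) = 0" using False assms(3) by (simp add: ennreal_neg mult_nonpos_nonneg)
  ultimately show ?thesis by simp
qed

lemma nu3_mono_nn:
  assumes g: "g > 0" and [measurable]: "\<Phi> \<in> borel_measurable borel" "h \<in> borel_measurable borel"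
    and agree: "\<And>x y z. 0 < x \<Longrightarrow> 0 < y \<Longrightarrow> 0 < z \<Longrightarrow> x + y + z = 1 \<Longrightarrow> \<Phi> (x,y,z) = x^a * y^b * z^d * h x"
  shows "(\<integral>\<^sup>+p. ennreal (\<Phi> p) \<partial>nu3 g) =
    (\<integral>\<^sup>+x. ennreal (indicator {0<..<1} x * (Cg g * Beta (b+g) (d+g) * x^a * (1-x)^(b+d) * wt g x * h x)) \<partial>lborel)"
proof -
  have "(\<integral>\<^sup>+p. ennreal (\<Phi> p) \<partial>nu3 g) = (\<integral>\<^sup>+x. \<integral>\<^sup>+y. ennreal (dirichlet3_density g (x,y)) * ennreal (\<Phi> (x, y, 1 - x - y)) \<partial>lborel \<partial>lborel)"
    by (rule nu3_nn) measurable
  also have "\<dots> = (\<integral>\<^sup>+x. ennreal (indicator {0<..<1} x * (Cg g * Beta (b+g) (d+g) * x^a * (1-x)^(b+d) * wt g x * h x)) \<partial>lborel)"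
  proof (rule nn_integral_cong)
    fix x :: real
    show "(\<integral>\<^sup>+y. ennreal (dirichlet3_density g (x,y)) * ennreal (\<Phi> (x, y, 1 - x - y)) \<partial>lborel) =
      ennreal (indicator {0<..<1} x * (Cg g * Beta (b+g) (d+g) * x^a * (1-x)^(b+d) * wt g x * h x))"
    proof (cases "x \<in> {0<..<1}")
      case False
      then have "\<And>y. dirichlet3_density g (x,y) = 0"
        by (auto simp: dirichlet3_density_def)
      then show ?thesis using False by simp
    next
      case True
      define s where "s = 1 - x"
      have s: "s > 0" using True by (simp add: s_def)
      have x: "x > 0" using True by simp
      define K where "K = Cg g * x powr (g-1) * x^a * h x"
      have pt: "ennreal (dirichlet3_density g (x,y)) * ennreal (\<Phi> (x, y, 1 - x - y)) =
          ennreal (K * (indicator {0..s} y * (y powr ((b+g)-1) * (s-y) powr ((d+g)-1))))" for y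
      proof (cases "0 < y \<and> y < s")
        case True
        have z: "1 - x - y > 0" using True s_def by simp
        have "dirichlet3_density g (x,y) = Cg g * (x powr (g-1) * y powr (g-1) * (1-x-y) powr (g-1))"
          using True x z s_def by (simp add: dirichlet3_density_def Cg_def powr_mult)
        moreover have "\<Phi> (x, y, 1 - x - y) = x^a * y^b * (1-x-y)^d * h x"
          using True x z by (intro agree) auto
        moreover have "y^b * y powr (g-1) = y powr ((b+g)-1)" using True pow_powr[of y b "g-1"] by (simp add: add_diff_eq)
        moreover have "(1-x-y)^d * (1-x-y) powr (g-1) = (s-y) powr ((d+g)-1)"
          using z pow_powr[of "1-x-y" d "g-1"] by (simp add: s_def add_diff_eq)
        ultimately have "dirichlet3_density g (x,y) * \<Phi> (x, y, 1 - x - y) = K * (indicator {0..s} y * (y powr ((b+g)-1) * (s-y) powr ((d+g)-1)))"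
          using True by (simp add: K_def indicator_def mult_ac)
        moreover have "dirichlet3_density g (x,y) \<ge> 0" by (rule dens_nonneg[OF g])
        ultimately show ?thesis
          by (simp add: ennreal_mult'[symmetric])
      next
        case False
        then have "dirichlet3_density g (x,y) = 0" by (auto simp: dirichlet3_density_def s_def)
        moreover have "indicator {0..s} y * (y powr ((b+g)-1) * (s-y) powr ((d+g)-1)) = 0"
          using False by (auto simp: indicator_def)
        ultimately show ?thesis by (metis ennreal_0 mult_zero_left mult_zero_right)
      qed
      have "(\<integral>\<^sup>+y. ennreal (dirichlet3_density g (x,y)) * ennreal (\<Phi> (x, y, 1 - x - y)) \<partial>lborel)
         = ennreal (K * (s powr ((b+g)+(d+g)-1) * Beta (b+g) (d+g)))"
        unfolding pt
        by (rule nn_cmult_signed[OF sbeta_nn[OF s]])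
           (use g s Beta_pos[of "b+g" "d+g"] in auto)
      also have "K * (s powr ((b+g)+(d+g)-1) * Beta (b+g) (d+g)) =
          indicator {0<..<1} x * (Cg g * Beta (b+g) (d+g) * x^a * (1-x)^(b+d) * wt g x * h x)"
      proof -
        have "(1-x)^(b+d) * (1-x) powr (2*g-1) = s powr ((b+g)+(d+g)-1)"
          using pow_powr[OF s, of "b+d" "2*g-1"] by (simp add: s_def algebra_simps)
        then show ?thesis using True by (simp add: K_def wt_def mult_ac)
      qed
      finally show ?thesis .
    qed
  qed
  finally show ?thesis .
qed



definition Wm :: "real \<Rightarrow> nat \<Rightarrow> nat \<Rightarrow> nat \<Rightarrow> real \<Rightarrow> real" where
  "Wm g a b d x = indicator {0<..<1} x * (Cg g * Beta (b+g) (d+g) * x^a * (1-x)^(b+d) * wt g x)"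

lemma Wm_meas[measurable]: "Wm g a b d \<in> borel_measurable borel"
  unfolding Wm_def wt_def by measurable

lemma Wm_nonneg: "g > 0 \<Longrightarrow> Wm g a b d x \<ge> 0"
  unfolding Wm_def wt_def using Cg_pos[of g] Beta_pos[of "b+g" "d+g"]
  by (auto simp: indicator_def intro!: mult_nonneg_nonneg)

lemma nu3_meas: "\<Phi> \<in> borel_measurable borel \<Longrightarrow> \<Phi> \<in> borel_measurable (nu3 g)"
  by (subst measurable_cong_sets[OF sets_nu3 refl]) simp

lemma nu3_mono_int:
  assumes g: "g > 0" and [measurable]: "\<Phi> \<in> borel_measurable borel" "h \<in> borel_measurable borel"
    and agree: "\<And>x y z. 0 < x \<Longrightarrow> 0 < y \<Longrightarrow> 0 < z \<Longrightarrow> x + y + z = 1 \<Longrightarrow> \<Phi> (x,y,z) = x^a * y^b * z^d * h x"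
  shows "(integrable (nu3 g) \<Phi> \<longleftrightarrow> integrable lborel (\<lambda>x. Wm g a b d x * h x))
     \<and> integral\<^sup>L (nu3 g) \<Phi> = (\<integral>x. Wm g a b d x * h x \<partial>lborel)"
proof -
  have pw: "\<And>x. Wm g a b d x * h x = indicator {0<..<1} x * (Cg g * Beta (b+g) (d+g) * x^a * (1-x)^(b+d) * wt g x * h x)"
    by (simp add: Wm_def mult.assoc)
  have pw2: "\<And>x. - (Wm g a b d x * h x) = indicator {0<..<1} x * (Cg g * Beta (b+g) (d+g) * x^a * (1-x)^(b+d) * wt g x * (- h x))"
    by (simp add: Wm_def mult.assoc)
  have e1: "(\<integral>\<^sup>+p. ennreal (\<Phi> p) \<partial>nu3 g) = (\<integral>\<^sup>+x. ennreal (Wm g a b d x * h x) \<partial>lborel)"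
    unfolding pw by (rule nu3_mono_nn[OF g assms(2,3) agree])
  have agree': "\<And>x y z. 0 < x \<Longrightarrow> 0 < y \<Longrightarrow> 0 < z \<Longrightarrow> x + y + z = 1 \<Longrightarrow> - \<Phi> (x,y,z) = x^a * y^b * z^d * (- h x)"
    using agree by simp
  have m1: "(\<lambda>p. - \<Phi> p) \<in> borel_measurable borel" "(\<lambda>x. - h x) \<in> borel_measurable borel" by measurable
  have e2: "(\<integral>\<^sup>+p. ennreal (- \<Phi> p) \<partial>nu3 g) = (\<integral>\<^sup>+x. ennreal (- (Wm g a b d x * h x)) \<partial>lborel)"
    unfolding pw2 by (rule nu3_mono_nn[OF g m1 agree'])
  have mP: "\<Phi> \<in> borel_measurable (nu3 g)" by (rule nu3_meas) simp
  have mW: "(\<lambda>x. Wm g a b d x * h x) \<in> borel_measurable lborel" by measurable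
  have mi: "integrable (nu3 g) \<Phi> \<longleftrightarrow> integrable lborel (\<lambda>x. Wm g a b d x * h x)"
    unfolding real_integrable_def e1 e2 using mP mW by blast
  show ?thesis
  proof (cases "integrable (nu3 g) \<Phi>")
    case True
    then have W: "integrable lborel (\<lambda>x. Wm g a b d x * h x)" using mi by blast
    have i1: "integral\<^sup>L (nu3 g) \<Phi> = enn2real (\<integral>\<^sup>+p. ennreal (\<Phi> p) \<partial>nu3 g) - enn2real (\<integral>\<^sup>+p. ennreal (- \<Phi> p) \<partial>nu3 g)"
      by (rule real_lebesgue_integral_def[OF True])
    have i2: "(\<integral>x. Wm g a b d x * h x \<partial>lborel) = enn2real (\<integral>\<^sup>+x. ennreal (Wm g a b d x * h x) \<partial>lborel) - enn2real (\<integral>\<^sup>+x. ennreal (- (Wm g a b d x * h x)) \<partial>lborel)"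
      by (rule real_lebesgue_integral_def[OF W])
    show ?thesis using True W i1 i2 e1 e2 by simp
  next
    case False
    then have W: "\<not> integrable lborel (\<lambda>x. Wm g a b d x * h x)" using mi by blast
    have "integral\<^sup>L (nu3 g) \<Phi> = 0" by (rule not_integrable_integral_eq[OF False])
    moreover have "(\<integral>x. Wm g a b d x * h x \<partial>lborel) = 0" by (rule not_integrable_integral_eq[OF W])
    ultimately show ?thesis using False W by simp
  qed
qed

lemma Wm_nn:
  assumes g: "g > 0"
  shows "(\<integral>\<^sup>+x. ennreal (Wm g a b d x) \<partial>lborel) = ennreal (Cg g * Beta (b+g) (d+g) * Beta (a+g) (b+d+2*g))"
proof -
  have "(\<lambda>x. ennreal (Wm g a b d x)) = (\<lambda>x. ennreal (Cg g * Beta (b+g) (d+g)) *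
     ennreal (indicator {0..1} x * (x powr ((a+g)-1) * (1-x) powr ((b+d+2*g)-1))))"
  (is "_ = (\<lambda>x. ?c * ?B x)")
  proof
    fix x :: real
    show "ennreal (Wm g a b d x) = ennreal (Cg g * Beta (b+g) (d+g)) *
     ennreal (indicator {0..1} x * (x powr ((a+g)-1) * (1-x) powr ((b+d+2*g)-1)))"
    proof (cases "x \<in> {0<..<1}")
      case True
      have "x^a * x powr (g-1) = x powr ((a+g)-1)" using True pow_powr[of x a "g-1"] by (simp add: add_diff_eq)
      moreover have "(1-x)^(b+d) * (1-x) powr (2*g-1) = (1-x) powr ((b+d+2*g)-1)"
        using True pow_powr[of "1-x" "b+d" "2*g-1"] by (simp add: add_diff_eq)
      ultimately have "Wm g a b d x = (Cg g * Beta (b+g) (d+g)) * (indicator {0..1} x * (x powr ((a+g)-1) * (1-x) powr ((b+d+2*g)-1)))"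
        using True by (simp add: Wm_def wt_def mult_ac)
      then show ?thesis using Cg_pos[OF g] Beta_pos[of "b+g" "d+g"] g
        by (simp add: ennreal_mult)
    next
      case False
      then have "Wm g a b d x = 0" by (simp add: Wm_def)
      moreover have "indicator {0..1} x * (x powr ((a+g)-1) * (1-x) powr ((b+d+2*g)-1)) = 0"
        using False by (auto simp: indicator_def)
      ultimately show ?thesis by (metis ennreal_0 mult_zero_right)
    qed
  qed
  then have "(\<integral>\<^sup>+x. ennreal (Wm g a b d x) \<partial>lborel) = (\<integral>\<^sup>+x. ?c * ?B x \<partial>lborel)"
    by (rule arg_cong)
  also have "\<dots> = ?c * (\<integral>\<^sup>+x. ?B x \<partial>lborel)"
    by (rule nn_integral_cmult) measurable
  also have "\<dots> = ennreal (Cg g * Beta (b+g) (d+g)) * ennreal (Beta (a+g) (b+d+2*g))"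
    using beta_nn[of "a+g" "b+d+2*g"] g by (simp only:)
  finally show ?thesis using g Cg_pos[OF g] Beta_pos[of "b+g" "d+g"] Beta_pos[of "a+g" "b+d+2*g"]
    by (simp add: ennreal_mult[symmetric])
qed

lemma Wm_integrable: "g > 0 \<Longrightarrow> integrable lborel (Wm g a b d)"
  by (rule integrableI_nonneg) (auto simp: Wm_nn Wm_nonneg)

lemma Wh_integrable:
  assumes g: "g > 0" and [measurable]: "h \<in> borel_measurable borel"
    and K: "\<And>x. x \<in> {0<..<1} \<Longrightarrow> \<bar>h x\<bar> \<le> K"
  shows "integrable lborel (\<lambda>x. Wm g a b d x * h x)"
proof (rule Bochner_Integration.integrable_bound[OF integrable_mult_right[OF Wm_integrable[OF g], of K]])
  show "AE x in lborel. norm (Wm g a b d x * h x) \<le> norm (K * Wm g a b d x)"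
  proof (rule AE_I2)
    fix x
    show "norm (Wm g a b d x * h x) \<le> norm (K * Wm g a b d x)"
    proof (cases "x \<in> {0<..<1}")
      case True
      have "norm (Wm g a b d x * h x) = Wm g a b d x * \<bar>h x\<bar>"
        using Wm_nonneg[OF g, of a b d x] by (simp add: abs_mult)
      also have "\<dots> \<le> Wm g a b d x * K" by (rule mult_left_mono[OF K[OF True] Wm_nonneg[OF g]])
      also have "\<dots> \<le> norm (K * Wm g a b d x)" by (metis abs_ge_self mult.commute real_norm_def)
      finally show ?thesis .
    next
      case False then show ?thesis by (simp add: Wm_def)
    qed
  qed
qed measurable



definition mono3 :: "nat \<Rightarrow> nat \<Rightarrow> nat \<Rightarrow> pt3 \<Rightarrow> real" where
  "mono3 a b d p = fst p ^ a * fst (snd p) ^ b * snd (snd p) ^ d"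

lemma mono3_meas[measurable]: "mono3 a b d \<in> borel_measurable borel"
  unfolding mono3_def borel_prod[symmetric] by measurable

lemma coord1_meas[measurable]: "coord i \<in> borel_measurable borel"
  unfolding coord_def borel_prod[symmetric] by measurable

lemma mono_h:
  assumes g: "g > 0" and [measurable]: "h \<in> borel_measurable borel"
    and hb: "\<And>x. x \<in> {0<..<1} \<Longrightarrow> \<bar>h x\<bar> \<le> K"
  shows "integrable (nu3 g) (\<lambda>p. mono3 a b d p * h (coord 1 p))
     \<and> (\<integral>p. mono3 a b d p * h (coord 1 p) \<partial>nu3 g) = (\<integral>x. Wm g a b d x * h x \<partial>lborel)"
proof -
  have m: "(\<lambda>p. mono3 a b d p * h (coord 1 p)) \<in> borel_measurable borel" by measurable
  have ag: "\<And>x y z. 0 < x \<Longrightarrow> 0 < y \<Longrightarrow> 0 < z \<Longrightarrow> x + y + z = 1 \<Longrightarrow>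
      mono3 a b d (x,y,z) * h (coord 1 (x,y,z)) = x^a * y^b * z^d * h x"
    by (simp add: mono3_def coord_def)
  show ?thesis using nu3_mono_int[OF g m assms(2) ag] Wh_integrable[OF g assms(2) hb] by blast
qed

definition Wf :: "real \<Rightarrow> nat \<Rightarrow> (nat \<Rightarrow> nat \<Rightarrow> nat \<Rightarrow> real) \<Rightarrow> real \<Rightarrow> real" where
  "Wf g n c x = (\<Sum>a\<le>n. \<Sum>b\<le>n. \<Sum>d\<le>n. (if a + b + d \<le> n then c a b d else 0) * Wm g a b d x)"

lemma Wf_meas[measurable]: "Wf g n c \<in> borel_measurable borel"
  unfolding Wf_def by measurable

lemma poly_h:
  assumes g: "g > 0" and [measurable]: "h \<in> borel_measurable borel"
    and hb: "\<And>x. x \<in> {0<..<1} \<Longrightarrow> \<bar>h x\<bar> \<le> K"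
    and f: "\<forall>x y z. f (x, y, z) =
       (\<Sum>a\<le>n. \<Sum>b\<le>n. \<Sum>d\<le>n. if a + b + d \<le> n then c a b d * x ^ a * y ^ b * z ^ d else 0)"
  shows "integrable (nu3 g) (\<lambda>p. f p * h (coord 1 p))
     \<and> (\<integral>p. f p * h (coord 1 p) \<partial>nu3 g) = (\<integral>x. Wf g n c x * h x \<partial>lborel)"
proof -
  let ?k = "\<lambda>a b d. (if a + b + d \<le> n then c a b d else 0)"
  have fe: "(\<lambda>p. f p * h (coord 1 p)) = (\<lambda>p. \<Sum>a\<le>n. \<Sum>b\<le>n. \<Sum>d\<le>n. ?k a b d * (mono3 a b d p * h (coord 1 p)))"
  proof
    fix p :: pt3
    obtain x y z where p: "p = (x,y,z)" by (cases p) auto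
    show "f p * h (coord 1 p) = (\<Sum>a\<le>n. \<Sum>b\<le>n. \<Sum>d\<le>n. ?k a b d * (mono3 a b d p * h (coord 1 p)))"
      unfolding p f[rule_format] sum_distrib_right
      by (intro sum.cong refl) (simp add: mono3_def)
  qed
  have we: "(\<lambda>x. Wf g n c x * h x) = (\<lambda>x. \<Sum>a\<le>n. \<Sum>b\<le>n. \<Sum>d\<le>n. ?k a b d * (Wm g a b d x * h x))"
    unfolding Wf_def sum_distrib_right by (simp add: mult_ac)
  have mh: "integrable (nu3 g) (\<lambda>p. mono3 a b d p * h (coord 1 p)) \<and> (\<integral>p. mono3 a b d p * h (coord 1 p) \<partial>nu3 g) = (\<integral>x. Wm g a b d x * h x \<partial>lborel)" for a b d
    by (rule mono_h[OF g assms(2) hb])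
  have "integrable (nu3 g) (\<lambda>p. \<Sum>a\<le>n. \<Sum>b\<le>n. \<Sum>d\<le>n. ?k a b d * (mono3 a b d p * h (coord 1 p)))"
    using mh by simp
  moreover have "(\<integral>p. (\<Sum>a\<le>n. \<Sum>b\<le>n. \<Sum>d\<le>n. ?k a b d * (mono3 a b d p * h (coord 1 p))) \<partial>nu3 g)
     = (\<integral>x. (\<Sum>a\<le>n. \<Sum>b\<le>n. \<Sum>d\<le>n. ?k a b d * (Wm g a b d x * h x)) \<partial>lborel)"
  proof -
    have "(\<integral>p. (\<Sum>a\<le>n. \<Sum>b\<le>n. \<Sum>d\<le>n. ?k a b d * (mono3 a b d p * h (coord 1 p))) \<partial>nu3 g)
       = (\<Sum>a\<le>n. \<Sum>b\<le>n. \<Sum>d\<le>n. ?k a b d * (\<integral>p. mono3 a b d p * h (coord 1 p) \<partial>nu3 g))"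
      using mh by (simp add: integral_sum integrable_sum integrable_mult_right)
    also have "\<dots> = (\<Sum>a\<le>n. \<Sum>b\<le>n. \<Sum>d\<le>n. ?k a b d * (\<integral>x. Wm g a b d x * h x \<partial>lborel))"
      using mh by simp
    also have "\<dots> = (\<integral>x. (\<Sum>a\<le>n. \<Sum>b\<le>n. \<Sum>d\<le>n. ?k a b d * (Wm g a b d x * h x)) \<partial>lborel)"
      using Wh_integrable[OF g assms(2) hb]
      by (simp add: integral_sum integrable_sum integrable_mult_right)
    finally show ?thesis .
  qed
  ultimately show ?thesis unfolding fe we by blast
qed



definition Pf :: "real \<Rightarrow> nat \<Rightarrow> (nat \<Rightarrow> nat \<Rightarrow> nat \<Rightarrow> real) \<Rightarrow> real poly" where
  "Pf g n c = (\<Sum>a\<le>n. \<Sum>b\<le>n. \<Sum>d\<le>n. smult ((if a + b + d \<le> n then c a b d else 0) * (Cg g * Beta (b+g) (d+g)))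
       ([:0,1:]^a * [:1,-1:]^(b+d)))"

lemma Wf_poly: "Wf g n c x = indicator {0<..<1} x * wt g x * poly (Pf g n c) x"
  unfolding Wf_def Pf_def poly_sum sum_distrib_left
  by (intro sum.cong refl) (simp add: Wm_def poly_monom mult_ac)

lemma degree_Pf_term: "degree (smult ((if a + b + d \<le> n then c a b d else 0) * K)
       ([:0,1:]^a * [:1,-1:]^(b+d) :: real poly)) \<le> n"
proof (cases "a + b + d \<le> n")
  case True
  have "degree ([:0,1:]^a * [:1,-1:]^(b+d) :: real poly) \<le> degree ([:0,1:]^a :: real poly) + degree ([:1,-1:]^(b+d) :: real poly)"
    by (rule degree_mult_le)
  also have "\<dots> \<le> 1 * a + 1 * (b+d)"
    by (intro add_mono order.trans[OF degree_power_le]) simp_all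
  finally show ?thesis using True by (intro order.trans[OF degree_smult_le]) simp
next
  case False then show ?thesis by simp
qed

lemma degree_Pf: "degree (Pf g n c) \<le> n"
  unfolding Pf_def by (intro degree_sum_le degree_Pf_term) auto

definition Jc :: "real \<Rightarrow> nat \<Rightarrow> nat \<Rightarrow> real" where
  "Jc g k l = Gamma (real k + g) / (fact k * Gamma (real k + 3 * g - 1))
     * ((-1) ^ l * real (k choose l) * Gamma (real (k + l) + 3 * g - 1) / Gamma (real l + g))"

definition Jp :: "real \<Rightarrow> nat \<Rightarrow> real poly" where
  "Jp g k = (\<Sum>l\<le>k. monom (Jc g k l) l)"

lemma poly_Jp: "poly (Jp g k) u = J g k u"
  unfolding Jp_def J_def poly_sum poly_monom sum_distrib_left Jc_def
  by (intro sum.cong refl) (simp add: mult_ac)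

lemma degree_Jp: "degree (Jp g k) \<le> k"
  unfolding Jp_def by (intro degree_sum_le) (auto simp: degree_monom_le intro: order.trans[OF degree_monom_le])

lemma coeff_Jp_top: "coeff (Jp g k) k = Jc g k k"
  unfolding Jp_def coeff_sum coeff_monom by simp

lemma Jc_top_nz: assumes "g > 0" "k \<ge> 1" shows "Jc g k k \<noteq> 0"
proof -
  have "Gamma (real k + g) > 0" "Gamma (real k + 3 * g - 1) > 0" "Gamma (real (k + k) + 3 * g - 1) > 0"
    using assms by (auto intro!: Gamma_real_pos)
  then show ?thesis unfolding Jc_def by simp
qed

lemma span_J:
  assumes g: "g > 0"
  shows "degree p \<le> n \<Longrightarrow> \<exists>c0 a. \<forall>u. poly p u = c0 + (\<Sum>k\<in>{1..n}. a k * J g k u)"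
proof (induction n arbitrary: p)
  case 0
  then obtain c where "p = [:c:]" using degree0_coeffs by blast
  then show ?case by (intro exI[of _ c] exI[of _ "\<lambda>_::nat. 0::real"]) simp
next
  case (Suc n)
  define l where "l = Jc g (Suc n) (Suc n)"
  have l: "l \<noteq> 0" unfolding l_def by (rule Jc_top_nz[OF g]) simp
  define q where "q = p - smult (coeff p (Suc n) / l) (Jp g (Suc n))"
  have d1: "degree (smult (coeff p (Suc n) / l) (Jp g (Suc n))) \<le> Suc n"
    using degree_Jp[of g "Suc n"] degree_smult_le order.trans by blast
  have dq: "degree q \<le> Suc n" unfolding q_def by (rule degree_diff_le[OF Suc.prems d1])
  have "degree q \<le> n"
  proof (rule degree_le, intro allI impI)
    fix i assume "n < i"
    show "coeff q i = 0"
    proof (cases "i = Suc n")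
      case True
      then show ?thesis using l by (simp add: q_def coeff_Jp_top l_def[symmetric])
    next
      case False
      then have "degree q < i" using dq \<open>n < i\<close> by simp
      then show ?thesis by (rule coeff_eq_0)
    qed
  qed
  from Suc.IH[OF this] obtain c0 a where ca: "\<forall>u. poly q u = c0 + (\<Sum>k\<in>{1..n}. a k * J g k u)" by blast
  define a' where "a' = a(Suc n := coeff p (Suc n) / l)"
  have "\<forall>u. poly p u = c0 + (\<Sum>k\<in>{1..Suc n}. a' k * J g k u)"
  proof
    fix u
    have "poly p u = poly q u + coeff p (Suc n) / l * J g (Suc n) u"
      by (simp add: q_def poly_Jp)
    also have "\<dots> = c0 + (\<Sum>k\<in>{1..n}. a' k * J g k u) + a' (Suc n) * J g (Suc n) u"
      using ca by (simp add: a'_def)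
    also have "\<dots> = c0 + (\<Sum>k\<in>{1..Suc n}. a' k * J g k u)"
      by (simp add: sum.cl_ivl_Suc)
    finally show "poly p u = c0 + (\<Sum>k\<in>{1..Suc n}. a' k * J g k u)" .
  qed
  then show ?case by blast
qed

lemma ar1: "(a::real) * x = a/3 * (x+y+z) + a/2 * (x - z) + a/6 * (x - 2*y + z)" by (simp add: field_simps)
lemma ar2: "(a::real) * y = a/3 * (x+y+z) + 0 * (x - z) + - a/3 * (x - 2*y + z)" by (simp add: field_simps)
lemma ar3: "(a::real) * z = a/3 * (x+y+z) + - a/2 * (x - z) + a/6 * (x - 2*y + z)" by (simp add: field_simps)

lemma Q_coord:
  assumes "i \<in> {1,2,3}"
  shows "Q_elem g n (\<lambda>p. c0 + (\<Sum>k\<in>{1..n}. a k * J g k (coord i p)))"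
proof -
  have c: "coord 1 p = fst p" "coord 2 p = fst (snd p)" "coord 3 p = snd (snd p)" for p
    by (simp_all add: coord_def)
  have FGH: "F g k p = J g k (fst p) + J g k (fst (snd p)) + J g k (snd (snd p))"
     "G g k p = J g k (fst p) - J g k (snd (snd p))"
     "H g k p = J g k (fst p) - 2 * J g k (fst (snd p)) + J g k (snd (snd p))" for k p
    by (simp_all add: F_def G_def H_def coord_def)
  consider "i = 1" | "i = 2" | "i = 3" using assms by auto
  then show ?thesis
  proof cases
    case 1
    have eq: "\<forall>p. c0 + (\<Sum>k\<in>{1..n}. a k * J g k (coord i p)) = c0 + (\<Sum>k\<in>{1..n}. a k / 3 * F g k p + a k / 2 * G g k p + a k / 6 * H g k p)"
      unfolding FGH 1 c using ar1 by presburger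
    show ?thesis unfolding Q_elem_def
      by (intro exI[of _ c0] exI[of _ "\<lambda>k. a k / 3"] exI[of _ "\<lambda>k. a k / 2"] exI[of _ "\<lambda>k. a k / 6"]) (rule eq)
  next
    case 2
    have eq: "\<forall>p. c0 + (\<Sum>k\<in>{1..n}. a k * J g k (coord i p)) = c0 + (\<Sum>k\<in>{1..n}. a k / 3 * F g k p + 0 * G g k p + - a k / 3 * H g k p)"
      unfolding FGH 2 c using ar2 by presburger
    show ?thesis unfolding Q_elem_def
      by (intro exI[of _ c0] exI[of _ "\<lambda>k. a k / 3"] exI[of _ "\<lambda>k. 0"] exI[of _ "\<lambda>k. - a k / 3"]) (rule eq)
  next
    case 3
    have eq: "\<forall>p. c0 + (\<Sum>k\<in>{1..n}. a k * J g k (coord i p)) = c0 + (\<Sum>k\<in>{1..n}. a k / 3 * F g k p + - a k / 2 * G g k p + a k / 6 * H g k p)"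
      unfolding FGH 3 c using ar3 by presburger
    show ?thesis unfolding Q_elem_def
      by (intro exI[of _ c0] exI[of _ "\<lambda>k. a k / 3"] exI[of _ "\<lambda>k. - a k / 2"] exI[of _ "\<lambda>k. a k / 6"]) (rule eq)
  qed
qed

lemma Q_poly:
  assumes g: "g > 0" and "i \<in> {1,2,3}" and "degree P \<le> n"
  shows "Q_elem g n (\<lambda>p. poly P (coord i p))"
proof -
  obtain c0 a where ca: "\<forall>u. poly P u = c0 + (\<Sum>k\<in>{1..n}. a k * J g k u)"
    using span_J[OF g assms(3)] by blast
  have "(\<lambda>p. poly P (coord i p)) = (\<lambda>p. c0 + (\<Sum>k\<in>{1..n}. a k * J g k (coord i p)))"
    using ca by simp
  then show ?thesis using Q_coord[OF assms(2)] by simp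
qed



lemma wt_nonneg: "wt g x \<ge> 0" by (simp add: wt_def)

lemma Wf_h_int:
  assumes g: "g > 0" and [measurable]: "h \<in> borel_measurable borel"
    and hb: "\<And>x. x \<in> {0<..<1} \<Longrightarrow> \<bar>h x\<bar> \<le> K"
  shows "integrable lborel (\<lambda>x. Wf g n c x * h x)"
  unfolding Wf_def sum_distrib_right using Wh_integrable[OF g assms(2) hb] by (simp add: mult.assoc)

lemma core:
  assumes g: "g > 0"
    and f: "\<forall>x y z. f (x, y, z) =
       (\<Sum>a\<le>n. \<Sum>b\<le>n. \<Sum>d\<le>n. if a + b + d \<le> n then c a b d * x ^ a * y ^ b * z ^ d else 0)"
    and hyp: "\<And>P. degree P \<le> n \<Longrightarrow> (\<integral>p. f p * poly P (coord 1 p) \<partial>nu3 g) = 0"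
    and B: "B \<in> sets borel"
  shows "integrable (nu3 g) (\<lambda>p. f p * indicator B (coord 1 p))
     \<and> (\<integral>p. f p * indicator B (coord 1 p) \<partial>nu3 g) = 0"
proof -
  define P where "P = Pf g n c"
  have "compact (poly P ` {0..1})"
    by (intro compact_continuous_image continuous_intros) auto
  then obtain K where K: "\<forall>y\<in>poly P ` {0..1}. norm y \<le> K"
    using compact_imp_bounded bounded_iff by metis
  have hb: "\<And>x. x \<in> {0<..<1} \<Longrightarrow> \<bar>poly P x\<bar> \<le> K" using K by auto
  have mP[measurable]: "poly P \<in> borel_measurable borel"
    by (intro borel_measurable_continuous_onI continuous_intros)
  note ph = poly_h[OF g mP hb f]
  have "(\<integral>x. Wf g n c x * poly P x \<partial>lborel) = 0"
    using ph hyp[OF degree_Pf[of g n c, folded P_def]] by simp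
  moreover have "\<And>x. Wf g n c x * poly P x = indicator {0<..<1} x * wt g x * (poly P x)^2"
    by (simp add: Wf_poly P_def power2_eq_square mult_ac)
  moreover have "integrable lborel (\<lambda>x. Wf g n c x * poly P x)"
    by (rule Wf_h_int[OF g mP hb])
  ultimately have "AE x in lborel. Wf g n c x * poly P x = 0"
    using integral_nonneg_eq_0_iff_AE[of lborel "\<lambda>x. Wf g n c x * poly P x"] wt_nonneg
    by (simp add: indicator_def)
  then have ae: "AE x in lborel. Wf g n c x = 0"
  proof (rule AE_mp, intro AE_I2 impI)
    fix x assume "Wf g n c x * poly P x = 0"
    then show "Wf g n c x = 0" by (auto simp: Wf_poly P_def)
  qed
  have hb1: "\<And>x. x \<in> {0<..<1} \<Longrightarrow> \<bar>indicator B x\<bar> \<le> (1::real)" by (simp add: indicator_def)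
  have mB: "indicator B \<in> borel_measurable borel" using B by measurable
  note pb = poly_h[OF g mB hb1 f]
  have "(\<integral>x. Wf g n c x * indicator B x \<partial>lborel) = 0"
    by (rule integral_eq_zero_AE) (use ae in auto)
  then show ?thesis using pb by simp
qed



definition s12 :: "pt3 \<Rightarrow> pt3" where "s12 p = (fst (snd p), fst p, snd (snd p))"
definition s13 :: "pt3 \<Rightarrow> pt3" where "s13 p = (snd (snd p), fst (snd p), fst p)"

lemma s12_meas[measurable]: "s12 \<in> borel_measurable borel"
  unfolding s12_def borel_prod[symmetric] by measurable
lemma s13_meas[measurable]: "s13 \<in> borel_measurable borel"
  unfolding s13_def borel_prod[symmetric] by measurable

lemma pair_swap_nn:
  fixes Gf :: "real \<times> real \<Rightarrow> ennreal"
  assumes [measurable]: "Gf \<in> borel_measurable borel"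
  shows "(\<integral>\<^sup>+x. \<integral>\<^sup>+y. Gf (x, y) \<partial>lborel \<partial>lborel) = (\<integral>\<^sup>+y. \<integral>\<^sup>+x. Gf (x, y) \<partial>lborel \<partial>lborel)"
proof -
  have m: "Gf \<in> borel_measurable (lborel \<Otimes>\<^sub>M lborel)" by (simp add: lborel_prod)
  show ?thesis using lborel.nn_integral_fst[OF m] lborel_pair.nn_integral_snd[OF m] by simp
qed

definition G3 :: "real \<Rightarrow> (pt3 \<Rightarrow> ennreal) \<Rightarrow> real \<times> real \<Rightarrow> ennreal" where
  "G3 g \<Phi> q = ennreal (dirichlet3_density g q) * \<Phi> (fst q, snd q, 1 - fst q - snd q)"

lemma G3_meas[measurable]:
  assumes "\<Phi> \<in> borel_measurable borel" shows "G3 g \<Phi> \<in> borel_measurable borel"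
proof -
  have [measurable]: "(\<lambda>q. \<Phi> (fst q, snd q, 1 - fst q - snd q)) \<in> borel_measurable borel"
    using measurable_compose[OF T_meas assms] by simp
  show ?thesis unfolding G3_def by measurable
qed

lemma nu3_nn_G3: "\<Phi> \<in> borel_measurable borel \<Longrightarrow>
   (\<integral>\<^sup>+p. \<Phi> p \<partial>nu3 g) = (\<integral>\<^sup>+x. \<integral>\<^sup>+y. G3 g \<Phi> (x,y) \<partial>lborel \<partial>lborel)"
  unfolding G3_def by (simp add: nu3_nn)

lemma dens_swap: "dirichlet3_density g (y,x) = dirichlet3_density g (x,y)"
  unfolding dirichlet3_density_def by (simp add: diff_diff_eq add.commute mult_ac)

lemma dens_13: "dirichlet3_density g (1-x-y,y) = dirichlet3_density g (x,y)"
  unfolding dirichlet3_density_def by (auto simp: mult_ac algebra_simps)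

lemma inv12_nn:
  assumes [measurable]: "\<Phi> \<in> borel_measurable borel"
  shows "(\<integral>\<^sup>+p. \<Phi> (s12 p) \<partial>nu3 g) = (\<integral>\<^sup>+p. \<Phi> p \<partial>nu3 g)"
proof -
  have m: "(\<lambda>p. \<Phi> (s12 p)) \<in> borel_measurable borel" by measurable
  have "(\<integral>\<^sup>+p. \<Phi> (s12 p) \<partial>nu3 g) = (\<integral>\<^sup>+x. \<integral>\<^sup>+y. G3 g (\<lambda>p. \<Phi> (s12 p)) (x,y) \<partial>lborel \<partial>lborel)"
    by (rule nu3_nn_G3[OF m])
  also have "\<dots> = (\<integral>\<^sup>+x. \<integral>\<^sup>+y. G3 g \<Phi> (y,x) \<partial>lborel \<partial>lborel)"
    by (simp add: G3_def s12_def dens_swap algebra_simps)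
  also have "\<dots> = (\<integral>\<^sup>+y. \<integral>\<^sup>+x. G3 g \<Phi> (y,x) \<partial>lborel \<partial>lborel)"
  proof -
    have mG: "(\<lambda>q. G3 g \<Phi> (snd q, fst q)) \<in> borel_measurable borel"
      by (rule measurable_compose[OF _ G3_meas[OF assms]]) (unfold borel_prod[symmetric], measurable)
    show ?thesis using pair_swap_nn[OF mG] by simp
  qed
  also have "\<dots> = (\<integral>\<^sup>+p. \<Phi> p \<partial>nu3 g)"
    by (rule nu3_nn_G3[symmetric]) simp
  finally show ?thesis .
qed

lemma inv13_nn:
  assumes [measurable]: "\<Phi> \<in> borel_measurable borel"
  shows "(\<integral>\<^sup>+p. \<Phi> (s13 p) \<partial>nu3 g) = (\<integral>\<^sup>+p. \<Phi> p \<partial>nu3 g)"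
proof -
  have m: "(\<lambda>p. \<Phi> (s13 p)) \<in> borel_measurable borel" by measurable
  have "(\<integral>\<^sup>+p. \<Phi> (s13 p) \<partial>nu3 g) = (\<integral>\<^sup>+x. \<integral>\<^sup>+y. G3 g (\<lambda>p. \<Phi> (s13 p)) (x,y) \<partial>lborel \<partial>lborel)"
    by (rule nu3_nn_G3[OF m])
  also have "\<dots> = (\<integral>\<^sup>+x. \<integral>\<^sup>+y. G3 g \<Phi> (1-x-y,y) \<partial>lborel \<partial>lborel)"
    by (simp add: G3_def s13_def dens_13)
  also have "\<dots> = (\<integral>\<^sup>+y. \<integral>\<^sup>+x. G3 g \<Phi> (1-x-y,y) \<partial>lborel \<partial>lborel)"
  proof -
    have mG: "(\<lambda>q. G3 g \<Phi> (1 - fst q - snd q, snd q)) \<in> borel_measurable borel"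
      by (rule measurable_compose[OF _ G3_meas[OF assms]]) (unfold borel_prod[symmetric], measurable)
    show ?thesis using pair_swap_nn[OF mG] by simp
  qed
  also have "\<dots> = (\<integral>\<^sup>+y. \<integral>\<^sup>+x. G3 g \<Phi> (x,y) \<partial>lborel \<partial>lborel)"
  proof (rule nn_integral_cong)
    fix y :: real
    have mm: "(\<lambda>x. G3 g \<Phi> (x,y)) \<in> borel_measurable borel"
      by (rule measurable_compose[OF _ G3_meas[OF assms]]) (unfold borel_prod[symmetric], measurable)
    have "(\<integral>\<^sup>+x. G3 g \<Phi> (x,y) \<partial>lborel) = ennreal \<bar>-1\<bar> * (\<integral>\<^sup>+x. G3 g \<Phi> ((1-y) + (-1) * x,y) \<partial>lborel)"
      by (rule nn_integral_real_affine[OF mm]) simp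
    then show "(\<integral>\<^sup>+x. G3 g \<Phi> (1-x-y,y) \<partial>lborel) = (\<integral>\<^sup>+x. G3 g \<Phi> (x,y) \<partial>lborel)"
      by (simp add: algebra_simps)
  qed
  also have "\<dots> = (\<integral>\<^sup>+x. \<integral>\<^sup>+y. G3 g \<Phi> (x,y) \<partial>lborel \<partial>lborel)"
    by (rule pair_swap_nn[symmetric]) (rule G3_meas[OF assms])
  also have "\<dots> = (\<integral>\<^sup>+p. \<Phi> p \<partial>nu3 g)"
    by (rule nu3_nn_G3[symmetric]) simp
  finally show ?thesis .
qed

lemma distr_inv:
  assumes [measurable]: "\<sigma> \<in> borel_measurable borel"
    and inv: "\<And>\<Phi>. \<Phi> \<in> borel_measurable borel \<Longrightarrow> (\<integral>\<^sup>+p. \<Phi> (\<sigma> p) \<partial>nu3 g) = (\<integral>\<^sup>+p. \<Phi> p \<partial>nu3 g)"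
  shows "distr (nu3 g) borel \<sigma> = nu3 g"
proof (rule measure_eqI)
  show "sets (distr (nu3 g) borel \<sigma>) = sets (nu3 g)" by simp
  fix A assume A: "A \<in> sets (distr (nu3 g) borel \<sigma>)"
  then have [measurable]: "A \<in> sets borel" by simp
  have "emeasure (distr (nu3 g) borel \<sigma>) A = (\<integral>\<^sup>+p. indicator A p \<partial>distr (nu3 g) borel \<sigma>)"
    using A by (rule nn_integral_indicator[symmetric])
  also have "\<dots> = (\<integral>\<^sup>+p. indicator A (\<sigma> p) \<partial>nu3 g)"
    by (rule nn_integral_distr) (simp_all add: measurable_cong_sets[OF sets_nu3 refl])
  also have "\<dots> = (\<integral>\<^sup>+p. indicator A p \<partial>nu3 g)"
    by (rule inv) simp
  also have "\<dots> = emeasure (nu3 g) A"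
    by (rule nn_integral_indicator) simp
  finally show "emeasure (distr (nu3 g) borel \<sigma>) A = emeasure (nu3 g) A" .
qed

lemma distr12: "distr (nu3 g) borel s12 = nu3 g"
  by (rule distr_inv[OF s12_meas inv12_nn])
lemma distr13: "distr (nu3 g) borel s13 = nu3 g"
  by (rule distr_inv[OF s13_meas inv13_nn])



lemma f_meas:
  assumes f: "\<forall>x y z. f (x, y, z) =
       (\<Sum>a\<le>n. \<Sum>b\<le>n. \<Sum>d\<le>n. if a + b + d \<le> n then c a b d * x ^ a * y ^ b * z ^ d else (0::real))"
  shows "f \<in> borel_measurable borel"
proof -
  have "f = (\<lambda>p. \<Sum>a\<le>n. \<Sum>b\<le>n. \<Sum>d\<le>n. if a + b + d \<le> n then c a b d * fst p ^ a * fst (snd p) ^ b * snd (snd p) ^ d else 0)"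
    by (rule ext, metis f prod.collapse)
  then show ?thesis unfolding borel_prod[symmetric] by simp
qed

lemma finite_nu3: assumes g: "g > 0" shows "finite_measure (nu3 g)"
proof (rule finite_measureI)
  have agree: "\<And>x y z. 0 < x \<Longrightarrow> 0 < y \<Longrightarrow> 0 < z \<Longrightarrow> x + y + z = 1 \<Longrightarrow>
     (\<lambda>_. 1::real) (x,y,z) = x^0 * y^0 * z^0 * (\<lambda>_. 1::real) x" by simp
  have m1: "(\<lambda>_. 1::real) \<in> borel_measurable (borel :: pt3 measure)" "(\<lambda>_. 1::real) \<in> borel_measurable (borel :: real measure)" by simp_all
  have e: "(\<integral>\<^sup>+p. ennreal ((\<lambda>_. 1::real) p) \<partial>nu3 g) = (\<integral>\<^sup>+x. ennreal (indicator {0<..<1} x * (Cg g * Beta (real (0::nat)+g) (real (0::nat)+g) * x^0 * (1-x)^(0+0) * wt g x * (\<lambda>_. 1::real) x)) \<partial>lborel)"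
    by (rule nu3_mono_nn[OF g m1 agree])
  have w: "\<And>x. indicator {0<..<1} x * (Cg g * Beta (real (0::nat)+g) (real (0::nat)+g) * x^0 * (1-x)^(0+0) * wt g x * (\<lambda>_. 1::real) x) = Wm g 0 0 0 x"
    by (simp add: Wm_def)
  have "emeasure (nu3 g) (space (nu3 g)) = (\<integral>\<^sup>+p. ennreal ((\<lambda>_. 1::real) p) \<partial>nu3 g)" by simp
  also have "\<dots> = (\<integral>\<^sup>+x. ennreal (Wm g 0 0 0 x) \<partial>lborel)"
    unfolding e w ..
  also have "\<dots> < \<infinity>" by (simp add: Wm_nn[OF g])
  finally show "emeasure (nu3 g) (space (nu3 g)) \<noteq> \<infinity>" by simp
qed

lemma nu3_transfer:
  fixes Fn :: "pt3 \<Rightarrow> real"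
  assumes [measurable]: "\<sigma> \<in> borel_measurable borel" and d: "distr (nu3 g) borel \<sigma> = nu3 g"
    and [measurable]: "Fn \<in> borel_measurable borel"
  shows "integral\<^sup>L (nu3 g) (\<lambda>p. Fn (\<sigma> p)) = integral\<^sup>L (nu3 g) Fn"
    "integrable (nu3 g) (\<lambda>p. Fn (\<sigma> p)) \<longleftrightarrow> integrable (nu3 g) Fn"
proof -
  have m: "\<sigma> \<in> measurable (nu3 g) borel" by (simp add: measurable_cong_sets[OF sets_nu3 refl])
  show "integral\<^sup>L (nu3 g) (\<lambda>p. Fn (\<sigma> p)) = integral\<^sup>L (nu3 g) Fn"
    using integral_distr[OF m, of Fn] d by simp
  show "integrable (nu3 g) (\<lambda>p. Fn (\<sigma> p)) \<longleftrightarrow> integrable (nu3 g) Fn"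
    using integrable_distr_eq[OF m, of Fn] d by simp
qed

lemma coord_general:
  assumes g: "g > 0" and [measurable]: "\<sigma> \<in> borel_measurable borel" and d: "distr (nu3 g) borel \<sigma> = nu3 g"
    and inv: "\<And>p. \<sigma> (\<sigma> p) = p" and ci: "\<And>p. coord i (\<sigma> p) = coord 1 p" and i: "i \<in> {1,2,3}"
    and [measurable]: "f \<in> borel_measurable borel"
    and f': "\<forall>x y z. f (\<sigma> (x, y, z)) =
       (\<Sum>a\<le>n. \<Sum>b\<le>n. \<Sum>d\<le>n. if a + b + d \<le> n then c a b d * x ^ a * y ^ b * z ^ d else 0)"
    and hyp: "\<forall>h. Q_elem g n h \<longrightarrow> (\<integral>p. f p * h p \<partial>nu3 g) = 0"
    and B: "B \<in> sets borel"
  shows "integrable (nu3 g) (\<lambda>p. f p * indicator B (coord i p))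
     \<and> (\<integral>p. f p * indicator B (coord i p) \<partial>nu3 g) = 0"
proof -
  have ci': "coord 1 (\<sigma> p) = coord i p" for p using ci[of "\<sigma> p"] inv by simp
  have hyp': "(\<integral>p. f (\<sigma> p) * poly P (coord 1 p) \<partial>nu3 g) = 0" if "degree P \<le> n" for P
  proof -
    have mP[measurable]: "poly P \<in> borel_measurable borel"
      by (intro borel_measurable_continuous_onI continuous_intros)
    have "(\<integral>p. f (\<sigma> p) * poly P (coord 1 p) \<partial>nu3 g) = (\<integral>p. f (\<sigma> p) * poly P (coord i (\<sigma> p)) \<partial>nu3 g)"
      by (simp add: ci)
    also have "\<dots> = (\<integral>p. f p * poly P (coord i p) \<partial>nu3 g)"
      by (rule nu3_transfer(1)[OF assms(2) d, of "\<lambda>q. f q * poly P (coord i q)"]) measurable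
    also have "\<dots> = 0" using hyp Q_poly[OF g i that] by blast
    finally show ?thesis .
  qed
  have c: "integrable (nu3 g) (\<lambda>p. f (\<sigma> p) * indicator B (coord 1 p))
     \<and> (\<integral>p. f (\<sigma> p) * indicator B (coord 1 p) \<partial>nu3 g) = 0"
    by (rule core[OF g f' hyp' B])
  have mF: "(\<lambda>q. f q * indicator B (coord i q)) \<in> borel_measurable borel" using B by measurable
  have e: "(\<lambda>p. f (\<sigma> p) * indicator B (coord 1 p)) = (\<lambda>p. f (\<sigma> p) * indicator B (coord i (\<sigma> p)))"
    by (simp add: ci)
  show ?thesis using c unfolding e nu3_transfer[OF assms(2) d mF] .
qed



lemma swap12_sum: "(\<Sum>a\<in>A. \<Sum>b\<in>A. \<Sum>d\<in>A. Fs a b d) = (\<Sum>a\<in>A. \<Sum>b\<in>A. \<Sum>d\<in>A. Fs b a d)"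
  by (rule sum.swap)

lemma rev3_sum: "(\<Sum>a\<in>A. \<Sum>b\<in>A. \<Sum>d\<in>A. Fs a b d) = (\<Sum>a\<in>A. \<Sum>b\<in>A. \<Sum>d\<in>A. Fs d b a)"
proof -
  have "(\<Sum>a\<in>A. \<Sum>b\<in>A. \<Sum>d\<in>A. Fs d b a) = (\<Sum>a\<in>A. \<Sum>d\<in>A. \<Sum>b\<in>A. Fs d b a)"
    by (rule sum.cong[OF refl]) (rule sum.swap)
  also have "\<dots> = (\<Sum>d\<in>A. \<Sum>a\<in>A. \<Sum>b\<in>A. Fs d b a)" by (rule sum.swap)
  also have "\<dots> = (\<Sum>d\<in>A. \<Sum>b\<in>A. \<Sum>a\<in>A. Fs d b a)"
    by (rule sum.cong[OF refl]) (rule sum.swap)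
  finally show ?thesis by simp
qed

lemma per_coord:
  assumes g: "g > 0"
    and f: "\<forall>x y z. f (x, y, z) =
       (\<Sum>a\<le>n. \<Sum>b\<le>n. \<Sum>d\<le>n. if a + b + d \<le> n then c a b d * x ^ a * y ^ b * z ^ d else 0)"
    and hyp: "\<forall>h. Q_elem g n h \<longrightarrow> (\<integral>p. f p * h p \<partial>nu3 g) = 0"
    and i: "i \<in> {1,2,3}" and B: "B \<in> sets borel"
  shows "integrable (nu3 g) (\<lambda>p. f p * indicator B (coord i p))
     \<and> (\<integral>p. f p * indicator B (coord i p) \<partial>nu3 g) = 0"
proof -
  have fm[measurable]: "f \<in> borel_measurable borel" by (rule f_meas[OF f])
  consider "i = 1" | "i = 2" | "i = 3" using i by auto
  then show ?thesis
  proof cases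
    case 1
    have f': "\<forall>x y z. f ((\<lambda>p. p) (x, y, z)) =
       (\<Sum>a\<le>n. \<Sum>b\<le>n. \<Sum>d\<le>n. if a + b + d \<le> n then c a b d * x ^ a * y ^ b * z ^ d else 0)"
      using f by simp
    show ?thesis
      by (rule coord_general[OF g _ _ _ _ i fm f' hyp B]) (simp_all add: 1 distr_id2)
  next
    case 2
    have f': "\<forall>x y z. f (s12 (x, y, z)) =
       (\<Sum>a\<le>n. \<Sum>b\<le>n. \<Sum>d\<le>n. if a + b + d \<le> n then c b a d * x ^ a * y ^ b * z ^ d else 0)"
    proof (intro allI)
      fix x y z :: real
      have "f (s12 (x, y, z)) = (\<Sum>a\<le>n. \<Sum>b\<le>n. \<Sum>d\<le>n. if a + b + d \<le> n then c a b d * y ^ a * x ^ b * z ^ d else 0)"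
        using f by (simp add: s12_def)
      also have "\<dots> = (\<Sum>a\<le>n. \<Sum>b\<le>n. \<Sum>d\<le>n. if b + a + d \<le> n then c b a d * y ^ b * x ^ a * z ^ d else 0)"
        by (rule swap12_sum)
      also have "\<dots> = (\<Sum>a\<le>n. \<Sum>b\<le>n. \<Sum>d\<le>n. if a + b + d \<le> n then c b a d * x ^ a * y ^ b * z ^ d else 0)"
        by (intro sum.cong refl) (simp add: ac_simps)
      finally show "f (s12 (x, y, z)) = (\<Sum>a\<le>n. \<Sum>b\<le>n. \<Sum>d\<le>n. if a + b + d \<le> n then c b a d * x ^ a * y ^ b * z ^ d else 0)" .
    qed
    show ?thesis
      by (rule coord_general[OF g s12_meas distr12 _ _ i fm f' hyp B]) (simp_all add: 2 s12_def coord_def)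
  next
    case 3
    have f': "\<forall>x y z. f (s13 (x, y, z)) =
       (\<Sum>a\<le>n. \<Sum>b\<le>n. \<Sum>d\<le>n. if a + b + d \<le> n then c d b a * x ^ a * y ^ b * z ^ d else 0)"
    proof (intro allI)
      fix x y z :: real
      have "f (s13 (x, y, z)) = (\<Sum>a\<le>n. \<Sum>b\<le>n. \<Sum>d\<le>n. if a + b + d \<le> n then c a b d * z ^ a * y ^ b * x ^ d else 0)"
        using f by (simp add: s13_def)
      also have "\<dots> = (\<Sum>a\<le>n. \<Sum>b\<le>n. \<Sum>d\<le>n. if d + b + a \<le> n then c d b a * z ^ d * y ^ b * x ^ a else 0)"
        by (rule rev3_sum)
      also have "\<dots> = (\<Sum>a\<le>n. \<Sum>b\<le>n. \<Sum>d\<le>n. if a + b + d \<le> n then c d b a * x ^ a * y ^ b * z ^ d else 0)"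
        by (intro sum.cong refl) (simp add: ac_simps)
      finally show "f (s13 (x, y, z)) = (\<Sum>a\<le>n. \<Sum>b\<le>n. \<Sum>d\<le>n. if a + b + d \<le> n then c d b a * x ^ a * y ^ b * z ^ d else 0)" .
    qed
    show ?thesis
      by (rule coord_general[OF g s13_meas distr13 _ _ i fm f' hyp B]) (simp_all add: 3 s13_def coord_def)
  qed
qed

theorem mainTheorem17:
  fixes g :: real and n :: nat and f :: "pt3 \<Rightarrow> real"
  assumes "g > 0"
    and "poly3_le n f"
    and "\<forall>h. Q_elem g n h \<longrightarrow> (\<integral>p. f p * h p \<partial>nu3 g) = 0"
  shows "\<forall>i\<in>{1,2,3::nat}.
           AE p in nu3 g. real_cond_exp (nu3 g)
              (vimage_algebra (space (nu3 g)) (coord i) borel) f p = 0"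
proof
  fix i :: nat assume i: "i \<in> {1,2,3}"
  obtain c where f: "\<forall>x y z. f (x, y, z) =
       (\<Sum>a\<le>n. \<Sum>b\<le>n. \<Sum>d\<le>n. if a + b + d \<le> n then c a b d * x ^ a * y ^ b * z ^ d else 0)"
    using assms(2) unfolding poly3_le_def by blast
  note pc = per_coord[OF assms(1) f assms(3) i]
  define Fa where "Fa = vimage_algebra (space (nu3 g)) (coord i) borel"
  have sF: "sets Fa = {coord i -` A \<inter> UNIV | A. A \<in> sets borel}"
    unfolding Fa_def by (subst sets_vimage_algebra2) auto
  have sub: "subalgebra (nu3 g) Fa"
    unfolding subalgebra_def
  proof
    show "sets Fa \<subseteq> sets (nu3 g)"
      unfolding sF by (auto intro: measurable_sets_borel[OF coord1_meas])
    show "space Fa = space (nu3 g)" by (simp add: Fa_def)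
  qed
  interpret fms: finite_measure_subalgebra "nu3 g" Fa
    using finite_nu3[OF assms(1)] sub by (simp add: finite_measure_subalgebra_def finite_measure_subalgebra_axioms_def)
  have fi: "integrable (nu3 g) f" using pc[of UNIV] by simp
  have "AE p in nu3 g. real_cond_exp (nu3 g) Fa f p = (\<lambda>_. 0) p"
  proof (rule fms.real_cond_exp_charact)
    fix A assume "A \<in> sets Fa"
    then obtain B where B: "B \<in> sets borel" and A: "A = coord i -` B \<inter> UNIV" unfolding sF by blast
    have "(\<integral>x\<in>A. f x \<partial>nu3 g) = (\<integral>p. f p * indicator B (coord i p) \<partial>nu3 g)"
      unfolding set_lebesgue_integral_def A by (intro Bochner_Integration.integral_cong) (auto simp: indicator_def)
    also have "\<dots> = 0" using pc[OF B] by simp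
    finally show "(\<integral>x\<in>A. f x \<partial>nu3 g) = (\<integral>x\<in>A. (\<lambda>_. 0) x \<partial>nu3 g)"
      by (simp add: set_lebesgue_integral_def)
  qed (simp_all add: fi)
  then show "AE p in nu3 g. real_cond_exp (nu3 g) (vimage_algebra (space (nu3 g)) (coord i) borel) f p = 0"
    by (simp add: Fa_def)
qed

end
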